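(* Let $F\in\mathbb{R}^{n\times n}$, $G\in\mathbb{R}^{n\times m}$ and $H\in\mathbb{R}^{p\times n}$ with $m\le p$ and $m\le n$, such that $(F,G)$ is reachable, $(F,H)$ is observable, $F$ has all its eigenvalues in the open left half-plane, $G$ has full column rank $m$, and $\mathrm{rank}(HG)=m$. Let $V_{\zeta}(s)=H(sI-F)^{-1}G$. Let $\Pi$ be a $p\times p$ permutation matrix such that $\Pi H=\begin{pmatrix}H_0\\ H_1\end{pmatrix}$ with $H_0\in\mathbb{R}^{m\times n}$ and $H_0G$ invertible (such a $\Pi$ exists because $\mathrm{rank}(HG)=m$). Define $\Gamma=F-G(H_0G)^{-1}H_0F$, $$T(s)=H_1\Gamma(sI-\Gamma)^{-1}G(H_0G)^{-1}+H_1G(H_0G)^{-1},\qquad M(s)=H_0F(sI-F)^{-1}G+H_0G .$$ Then $$\Pi\, V_{\zeta}(s)=\begin{pmatrix} I\\ T(s)\end{pmatrix}M(s)\,s^{-1}.$$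
   Context: Here $V_\zeta$ is a minimal stable spectral factor of the spectral density $\Phi_\zeta(i\omega)=V_\zeta(i\omega)V_\zeta(-i\omega)'$ of a stationary $p$-vector process $\zeta$; reordering the rows of $H$ by $\Pi$ corresponds to reordering the entries of $\zeta$ so that the first $m$ entries form $u$ and the remaining $p-m$ form $y$, and $T$ is then the transfer function relating $u$ to $y$. *)

theory Defs
  imports "Jordan_Normal_Form.Char_Poly" "Jordan_Normal_Form.DL_Rank"
    "HOL-Combinatorics.Permutations"
begin

definition minv :: "'a :: field mat \<Rightarrow> 'a mat" where
  "minv A = (inverse (det A)) \<cdot>\<^sub>m adj_mat A"

abbreviation mrank :: "nat \<Rightarrow> 'a :: field mat \<Rightarrow> nat" where
  "mrank nr A \<equiv> vec_space.rank nr A"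

text \<open>Controllability (reachability) matrix [G, FG, ..., F^(n-1) G], of size n x (n*m).\<close>
definition ctrb_mat :: "nat \<Rightarrow> nat \<Rightarrow> 'a :: comm_ring_1 mat \<Rightarrow> 'a mat \<Rightarrow> 'a mat" where
  "ctrb_mat n m F G = mat n (n * m) (\<lambda>(i,j). (F ^\<^sub>m (j div m) * G) $$ (i, j mod m))"

text \<open>Observability matrix [H; HF; ...; H F^(n-1)], of size (n*p) x n.\<close>
definition obsv_mat :: "nat \<Rightarrow> nat \<Rightarrow> 'a :: comm_ring_1 mat \<Rightarrow> 'a mat \<Rightarrow> 'a mat" where
  "obsv_mat n p F H = mat (n * p) n (\<lambda>(i,j). (H * F ^\<^sub>m (i div p)) $$ (i mod p, j))"

definition reachable :: "nat \<Rightarrow> nat \<Rightarrow> real mat \<Rightarrow> real mat \<Rightarrow> bool" where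
  "reachable n m F G \<longleftrightarrow> mrank n (ctrb_mat n m F G) = n"

definition observable :: "nat \<Rightarrow> nat \<Rightarrow> real mat \<Rightarrow> real mat \<Rightarrow> bool" where
  "observable n p F H \<longleftrightarrow> mrank (n * p) (obsv_mat n p F H) = n"

definition hurwitz :: "real mat \<Rightarrow> bool" where
  "hurwitz F \<longleftrightarrow> (\<forall>z. eigenvalue (map_mat complex_of_real F) z \<longrightarrow> Re z < 0)"

text \<open>Permutation matrix: row i of P * A is row (\<sigma> i) of A.\<close>
definition perm_mat :: "nat \<Rightarrow> (nat \<Rightarrow> nat) \<Rightarrow> 'a :: zero_neq_one mat" where
  "perm_mat p \<sigma> = mat p p (\<lambda>(i,j). if \<sigma> i = j then 1 else 0)"

definition is_perm_mat :: "nat \<Rightarrow> 'a :: zero_neq_one mat \<Rightarrow> bool" where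
  "is_perm_mat p P \<longleftrightarrow> (\<exists>\<sigma>. \<sigma> permutes {..<p} \<and> P = perm_mat p \<sigma>)"

abbreviation cmat :: "real mat \<Rightarrow> complex mat" where
  "cmat A \<equiv> map_mat complex_of_real A"

end

theory Submission
  imports Defs
begin

lemma minv_props:
  fixes A :: "'a::field mat"
  assumes A: "A \<in> carrier_mat n n" and d: "det A \<noteq> 0"
  shows "minv A \<in> carrier_mat n n" "minv A * A = 1\<^sub>m n" "A * minv A = 1\<^sub>m n"
proof -
  show c: "minv A \<in> carrier_mat n n" unfolding minv_def using adj_mat(1)[OF A] by simp
  have "minv A * A = inverse (det A) \<cdot>\<^sub>m (adj_mat A * A)"
    unfolding minv_def by (rule mult_smult_assoc_mat[OF adj_mat(1)[OF A] A])
  also have "\<dots> = 1\<^sub>m n" unfolding adj_mat(3)[OF A] using d by (intro eq_matI, auto)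
  finally show "minv A * A = 1\<^sub>m n" .
  have "A * minv A = inverse (det A) \<cdot>\<^sub>m (A * adj_mat A)"
    unfolding minv_def by (rule mult_smult_distrib[OF A adj_mat(1)[OF A]])
  also have "\<dots> = 1\<^sub>m n" unfolding adj_mat(2)[OF A] using d by (intro eq_matI, auto)
  finally show "A * minv A = 1\<^sub>m n" .
qed

lemma inv_det:
  fixes A :: "'a::field mat"
  assumes A: "A \<in> carrier_mat n n" and i: "invertible_mat A"
  shows "det A \<noteq> 0"
proof -
  obtain B where B: "A * B = 1\<^sub>m n" "B * A = 1\<^sub>m (dim_row B)"
    using i A unfolding invertible_mat_def inverts_mat_def by auto
  have "B \<in> carrier_mat n n" using B A
    by (metis carrier_matD(1) carrier_matD(2) carrier_matI index_mult_mat(2) index_mult_mat(3) index_one_mat(2) index_one_mat(3))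
  then have "det A * det B = 1" using det_mult[OF A] B det_one by metis
  then show ?thesis by auto
qed

lemma append_rows_mult:
  fixes A :: "'a::semiring_1 mat"
  assumes A: "A \<in> carrier_mat n1 k" and B: "B \<in> carrier_mat n2 k" and C: "C \<in> carrier_mat k l"
  shows "(A @\<^sub>r B) * C = (A * C) @\<^sub>r (B * C)"
proof (rule eq_matI)
  fix i j assume i: "i < dim_row ((A * C) @\<^sub>r (B * C))" and j: "j < dim_col ((A * C) @\<^sub>r (B * C))"
  have r: "row (A @\<^sub>r B) i = (if i < n1 then row A i else row B (i - n1))"
    using A B i C by (auto simp: append_rows_def intro!: eq_vecI)
  show "((A @\<^sub>r B) * C) $$ (i, j) = ((A * C) @\<^sub>r (B * C)) $$ (i, j)"
    using A B C i j r by (auto simp: append_rows_def)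
qed (insert A B C, auto simp: append_rows_def)

lemma smult_append_rows:
  fixes A :: "'a::semiring_1 mat"
  assumes A: "A \<in> carrier_mat n1 k" and B: "B \<in> carrier_mat n2 k"
  shows "a \<cdot>\<^sub>m (A @\<^sub>r B) = (a \<cdot>\<^sub>m A) @\<^sub>r (a \<cdot>\<^sub>m B)"
  using A B by (intro eq_matI) (auto simp: append_rows_def)

lemma map_append_rows:
  assumes A: "A \<in> carrier_mat n1 k" and B: "B \<in> carrier_mat n2 k"
  shows "map_mat f (A @\<^sub>r B) = map_mat f A @\<^sub>r map_mat f B"
  using A B by (intro eq_matI) (auto simp: append_rows_def)

lemma cmat_mult: "A \<in> carrier_mat a b \<Longrightarrow> B \<in> carrier_mat b c \<Longrightarrow> cmat (A * B) = cmat A * cmat B"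
  by (rule of_real_hom.mat_hom_mult)

lemma cmat_minus: "A \<in> carrier_mat a b \<Longrightarrow> B \<in> carrier_mat a b \<Longrightarrow> cmat (A - B) = cmat A - cmat B"
  by (intro eq_matI) auto

lemma solve_res:
  fixes A R :: "'a::field mat"
  assumes A: "A \<in> carrier_mat n n" and R: "R \<in> carrier_mat n n"
    and e: "(s \<cdot>\<^sub>m 1\<^sub>m n - A) * R = 1\<^sub>m n"
  shows "A * R = s \<cdot>\<^sub>m R - 1\<^sub>m n"
proof -
  have "(s \<cdot>\<^sub>m 1\<^sub>m n - A) * R = s \<cdot>\<^sub>m R - A * R"
    using A R by (simp add: minus_mult_distrib_mat[of _ n n] mult_smult_assoc_mat[of _ n n])
  with e have "s \<cdot>\<^sub>m R - A * R = 1\<^sub>m n" by simp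
  then have "\<And>i j. i < n \<Longrightarrow> j < n \<Longrightarrow> s * R $$ (i,j) - (A * R) $$ (i,j) = 1\<^sub>m n $$ (i,j)"
    using A R by (metis carrier_matD index_minus_mat(1) index_mult_mat(2,3) index_smult_mat(1,2))
  then show ?thesis using A R
    by (intro eq_matI) (auto simp: algebra_simps)
qed

lemma L1: fixes A :: "'a::comm_ring_1 mat"
  shows "A \<in> carrier_mat nr n \<Longrightarrow> B \<in> carrier_mat n nc \<Longrightarrow> C \<in> carrier_mat n nc \<Longrightarrow>
  A * (s \<cdot>\<^sub>m B - C) = s \<cdot>\<^sub>m (A * B) - A * C"
  by (subst mult_minus_distrib_mat[of _ nr n], auto simp: mult_smult_distrib)

lemma L2: fixes A :: "'a::comm_ring_1 mat"
  shows "A \<in> carrier_mat n nc \<Longrightarrow> B \<in> carrier_mat nr n \<Longrightarrow> C \<in> carrier_mat nr n \<Longrightarrow>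
  (s \<cdot>\<^sub>m B - C) * A = s \<cdot>\<^sub>m (B * A) - C * A"
  by (subst minus_mult_distrib_mat[of _ nr n], auto simp: mult_smult_assoc_mat)

lemma L3: fixes X :: "'a::comm_ring_1 mat"
  shows "X \<in> carrier_mat nr nc \<Longrightarrow> Y \<in> carrier_mat nr nc \<Longrightarrow> s \<cdot>\<^sub>m X - Y + Y = s \<cdot>\<^sub>m X"
  by (intro eq_matI) auto

lemma L4: fixes Y :: "'a::comm_ring_1 mat"
  shows "Y \<in> carrier_mat nr nc \<Longrightarrow> Z \<in> carrier_mat nr nc \<Longrightarrow> G \<in> carrier_mat nr nc \<Longrightarrow>
   s \<cdot>\<^sub>m Y - ((s \<cdot>\<^sub>m Y - G) - (s \<cdot>\<^sub>m Z - G)) = s \<cdot>\<^sub>m Z"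
  by (intro eq_matI) auto

lemma assoc4: fixes A :: "'a::semiring_1 mat"
  assumes "A \<in> carrier_mat a b" "B \<in> carrier_mat b c" "C \<in> carrier_mat c d" "D \<in> carrier_mat d e"
  shows "A * B * C * D = A * ((B * C) * D)"
proof -
  have "A * B * C = A * (B * C)" using assms by (intro assoc_mult_mat) auto
  then have "A * B * C * D = A * (B * C) * D" by simp
  also have "\<dots> = A * ((B * C) * D)" using assms by (intro assoc_mult_mat) auto
  finally show ?thesis .
qed

lemma assoc5: fixes A :: "'a::semiring_1 mat"
  assumes "A \<in> carrier_mat a b" "B \<in> carrier_mat b c" "C \<in> carrier_mat c d" "D \<in> carrier_mat d e"
    "E \<in> carrier_mat e f"
  shows "A * B * C * D * E = A * ((B * C) * (D * E))"
proof -
  have "A * B * C * D = A * ((B * C) * D)" using assms(1-4) by (rule assoc4)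
  then have "A * B * C * D * E = A * ((B * C) * D) * E" by simp
  also have "\<dots> = A * (((B * C) * D) * E)" using assms by (intro assoc_mult_mat) auto
  also have "((B * C) * D) * E = (B * C) * (D * E)" using assms by (intro assoc_mult_mat) auto
  finally show ?thesis .
qed

theorem theorem1:
  fixes n m p :: nat and F G H Pi H0 H1 :: "real mat" and s :: complex
  assumes dims: "F \<in> carrier_mat n n" "G \<in> carrier_mat n m" "H \<in> carrier_mat p n"
    and mp: "m \<le> p" and mn: "m \<le> n"
    and reach: "reachable n m F G"
    and obs: "observable n p F H"
    and stab: "hurwitz F"
    and rankG: "mrank n G = m"
    and rankHG: "mrank p (H * G) = m"
    and Pi: "is_perm_mat p Pi"
    and H0: "H0 \<in> carrier_mat m n" and H1: "H1 \<in> carrier_mat (p - m) n"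
    and split: "Pi * H = H0 @\<^sub>r H1"
    and inv: "invertible_mat (H0 * G)"
    and s0: "s \<noteq> 0"
    and sF: "det (s \<cdot>\<^sub>m 1\<^sub>m n - cmat F) \<noteq> 0"
    and sGam: "det (s \<cdot>\<^sub>m 1\<^sub>m n - cmat (F - G * minv (H0 * G) * H0 * F)) \<noteq> 0"
  shows "let Gam = F - G * minv (H0 * G) * H0 * F;
             V = cmat H * minv (s \<cdot>\<^sub>m 1\<^sub>m n - cmat F) * cmat G;
             T = cmat H1 * cmat Gam * minv (s \<cdot>\<^sub>m 1\<^sub>m n - cmat Gam) * cmat G * cmat (minv (H0 * G))
                 + cmat H1 * cmat G * cmat (minv (H0 * G));
             M = cmat H0 * cmat F * minv (s \<cdot>\<^sub>m 1\<^sub>m n - cmat F) * cmat G + cmat (H0 * G)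
         in cmat Pi * V = (inverse s) \<cdot>\<^sub>m (((1\<^sub>m m) @\<^sub>r T) * M)"
proof -
  note Fc = dims(1) and Gc = dims(2) and Hc = dims(3)
  have Pc: "Pi \<in> carrier_mat p p" using Pi unfolding is_perm_mat_def perm_mat_def by auto
  let ?N = "H0 * G"
  have Nc: "?N \<in> carrier_mat m m" using H0 Gc by simp
  have dN: "det ?N \<noteq> 0" by (rule inv_det[OF Nc inv])
  let ?Ni = "cmat (minv ?N)"
  have Nic: "?Ni \<in> carrier_mat m m" using minv_props(1)[OF Nc dN] by simp
  have NiN: "?Ni * (cmat H0 * cmat G) = 1\<^sub>m m"
  proof -
    have "cmat (minv ?N * ?N) = cmat (1\<^sub>m m)" using minv_props(2)[OF Nc dN] by simp
    then show ?thesis using minv_props(1)[OF Nc dN] Nc H0 Gc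
      by (simp add: cmat_mult[of _ m m _ m] cmat_mult[of H0 m n G m] of_real_hom.mat_hom_one)
  qed
  let ?Gm = "F - G * minv ?N * H0 * F"
  have Gmc: "?Gm \<in> carrier_mat n n" using Fc Gc H0 minv_props(1)[OF Nc dN]
    by (intro minus_carrier_mat) auto
  have cGm: "cmat ?Gm = cmat F - cmat G * ?Ni * cmat H0 * cmat F"
  proof -
    have "cmat (G * minv ?N * H0 * F) = cmat G * ?Ni * cmat H0 * cmat F"
      using Fc Gc H0 minv_props(1)[OF Nc dN]
      by (simp add: cmat_mult[of _ n m _ m] cmat_mult[of _ n m _ n] cmat_mult[of _ n n _ n] cmat_mult[of _ m m _ n])
    moreover have "cmat ?Gm = cmat F - cmat (G * minv ?N * H0 * F)"
      using Fc Gc H0 minv_props(1)[OF Nc dN] by (intro cmat_minus[of _ n n]) auto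
    ultimately show ?thesis by simp
  qed
  let ?cF = "cmat F" and ?cG = "cmat G" and ?cH0 = "cmat H0" and ?cH1 = "cmat H1"
  let ?cGm = "cmat ?Gm"
  have cFc: "?cF \<in> carrier_mat n n" and cGc: "?cG \<in> carrier_mat n m"
    and cH0c: "?cH0 \<in> carrier_mat m n" and cH1c: "?cH1 \<in> carrier_mat (p - m) n"
    and cGmc: "?cGm \<in> carrier_mat n n"
    using Fc Gc H0 H1 Gmc by auto
  let ?A = "s \<cdot>\<^sub>m 1\<^sub>m n - ?cF" and ?B = "s \<cdot>\<^sub>m 1\<^sub>m n - ?cGm"
  have Ac: "?A \<in> carrier_mat n n" and Bc: "?B \<in> carrier_mat n n" using cFc cGmc
    by (auto intro: minus_carrier_mat)
  let ?R = "minv ?A" and ?S = "minv ?B"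
  note R = minv_props[OF Ac sF] and S = minv_props[OF Bc sGam]
  have FR: "?cF * ?R = s \<cdot>\<^sub>m ?R - 1\<^sub>m n" by (rule solve_res[OF cFc R(1) R(3)])
  have GS: "?cGm * ?S = s \<cdot>\<^sub>m ?S - 1\<^sub>m n" by (rule solve_res[OF cGmc S(1) S(3)])
  let ?Y = "?R * ?cG"
  have Yc: "?Y \<in> carrier_mat n m" using R(1) cGc by simp
  have FRc: "?cF * ?R \<in> carrier_mat n n" using R(1) cFc by simp
  have GmSc: "?cGm * ?S \<in> carrier_mat n n" using S(1) cGmc by simp
  have cHG: "cmat (H0 * G) = ?cH0 * ?cG" using H0 Gc by (rule cmat_mult)
  have Meq: "?cH0 * ?cF * ?R * ?cG + cmat (H0 * G) = s \<cdot>\<^sub>m (?cH0 * ?Y)"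
  proof -
    have "?cH0 * ?cF * ?R * ?cG = ?cH0 * ((?cF * ?R) * ?cG)" by (rule assoc4[OF cH0c cFc R(1) cGc])
    also have "\<dots> = ?cH0 * (s \<cdot>\<^sub>m ?Y - ?cG)" unfolding FR using R(1) cGc
      by (subst L2[where n=n]) auto
    also have "\<dots> = s \<cdot>\<^sub>m (?cH0 * ?Y) - ?cH0 * ?cG" using cH0c Yc cGc by (rule L1)
    finally show ?thesis unfolding cHG using cH0c Yc cGc by (simp add: L3[of _ m m])
  qed
  let ?V = "?cG * ?Ni"
  have Vc: "?V \<in> carrier_mat n m" using cGc Nic by simp
  have Teq: "?cH1 * ?cGm * ?S * ?cG * ?Ni + ?cH1 * ?cG * ?Ni = s \<cdot>\<^sub>m (?cH1 * (?S * ?V))"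
  proof -
    have "?cH1 * ?cGm * ?S * ?cG * ?Ni = ?cH1 * ((?cGm * ?S) * ?V)"
      by (rule assoc5[OF cH1c cGmc S(1) cGc Nic])
    also have "\<dots> = ?cH1 * (s \<cdot>\<^sub>m (?S * ?V) - ?V)" unfolding GS using S(1) Vc
      by (subst L2[where n=n]) auto
    also have "\<dots> = s \<cdot>\<^sub>m (?cH1 * (?S * ?V)) - ?cH1 * ?V" using cH1c S(1) Vc by (intro L1) auto
    finally show ?thesis using cH1c S(1) Vc cGc Nic by (simp add: L3[of _ "p - m" m])
  qed
  let ?K = "?cG * ?Ni * ?cH0"
  have Kc: "?K \<in> carrier_mat n n" using cGc Nic cH0c by simp
  have KG: "?K * ?cG = ?cG"
  proof -
    have "?K * ?cG = (?cG * ?Ni) * (?cH0 * ?cG)"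
      using cGc Nic cH0c by (intro assoc_mult_mat) auto
    also have "\<dots> = ?cG * (?Ni * (?cH0 * ?cG))"
      using cGc Nic cH0c by (intro assoc_mult_mat) auto
    finally show ?thesis unfolding NiN using cGc by simp
  qed
  have KYc: "?K * ?Y \<in> carrier_mat n m" using Kc Yc by simp
  have FYc: "?cF * ?Y \<in> carrier_mat n m" using cFc Yc by simp
  have KFc: "?K * ?cF \<in> carrier_mat n n" using Kc cFc by simp
  have key: "?B * ?Y = s \<cdot>\<^sub>m (?K * ?Y)"
  proof -
    have e1: "?B * ?Y = s \<cdot>\<^sub>m (1\<^sub>m n * ?Y) - ?cGm * ?Y" by (rule L2[OF Yc one_carrier_mat cGmc])
    have e1': "1\<^sub>m n * ?Y = ?Y" by (rule left_mult_one_mat[OF Yc])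
    have e2: "?cF * ?Y = s \<cdot>\<^sub>m ?Y - ?cG"
    proof -
      have "?cF * ?Y = (?cF * ?R) * ?cG" by (rule assoc_mult_mat[OF cFc R(1) cGc, symmetric])
      also have "\<dots> = s \<cdot>\<^sub>m (?R * ?cG) - 1\<^sub>m n * ?cG" unfolding FR by (rule L2[OF cGc R(1) one_carrier_mat])
      finally show ?thesis using left_mult_one_mat[OF cGc] by simp
    qed
    have e3: "?cGm * ?Y = ?cF * ?Y - ?K * (?cF * ?Y)"
    proof -
      have "?cGm * ?Y = ?cF * ?Y - (?K * ?cF) * ?Y"
        unfolding cGm by (rule minus_mult_distrib_mat[OF cFc KFc Yc])
      also have "(?K * ?cF) * ?Y = ?K * (?cF * ?Y)" by (rule assoc_mult_mat[OF Kc cFc Yc])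
      finally show ?thesis .
    qed
    have e4: "?K * (?cF * ?Y) = s \<cdot>\<^sub>m (?K * ?Y) - ?cG"
      unfolding e2 L1[OF Kc Yc cGc] KG ..
    show ?thesis unfolding e1 e1' e3 unfolding e4 unfolding e2 by (rule L4[OF Yc KYc cGc])
  qed
  have SVc: "?S * ?V \<in> carrier_mat n m" using S(1) Vc by simp
  have W: "?cH0 * ?Y \<in> carrier_mat m m" using cH0c Yc by simp
  have X: "s \<cdot>\<^sub>m (?cH1 * (?S * ?V)) * (?cH0 * ?Y) = ?cH1 * ?Y"
  proof -
    have a1: "s \<cdot>\<^sub>m (?cH1 * (?S * ?V)) * (?cH0 * ?Y) = s \<cdot>\<^sub>m ((?cH1 * (?S * ?V)) * (?cH0 * ?Y))"
      by (rule mult_smult_assoc_mat[of _ "p - m" m]) (use cH1c SVc W in auto)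
    have a2: "(?cH1 * (?S * ?V)) * (?cH0 * ?Y) = ?cH1 * ((?S * ?V) * (?cH0 * ?Y))"
      by (rule assoc_mult_mat[OF cH1c SVc W])
    have a3: "(?S * ?V) * (?cH0 * ?Y) = ?S * (?V * (?cH0 * ?Y))"
      by (rule assoc_mult_mat[OF S(1) Vc W])
    have a4: "?V * (?cH0 * ?Y) = ?K * ?Y"
      by (rule assoc_mult_mat[OF Vc cH0c Yc, symmetric])
    have a5: "s \<cdot>\<^sub>m (?cH1 * (?S * (?K * ?Y))) = ?cH1 * (?S * (s \<cdot>\<^sub>m (?K * ?Y)))"
      using mult_smult_distrib[OF S(1) KYc, of s] mult_smult_distrib[OF cH1c, of "?S * (?K * ?Y)" m s]
        S(1) KYc by simp
    have a7: "?S * (?B * ?Y) = ?Y"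
      using assoc_mult_mat[OF S(1) Bc Yc] S(2) left_mult_one_mat[OF Yc] by simp
    show ?thesis unfolding a1 a2 a3 a4 a5 key[symmetric] a7 ..
  qed
  have PH: "cmat Pi * cmat H = ?cH0 @\<^sub>r ?cH1"
    using cmat_mult[OF Pc Hc] split map_append_rows[OF H0 H1] by metis
  have lhs: "cmat Pi * (cmat H * ?R * ?cG) = (?cH0 * ?Y) @\<^sub>r (?cH1 * ?Y)"
  proof -
    have cHc: "cmat H \<in> carrier_mat p n" using Hc by simp
    have cPc: "cmat Pi \<in> carrier_mat p p" using Pc by simp
    have "cmat Pi * (cmat H * ?R * ?cG) = cmat Pi * (cmat H * ?Y)"
      using assoc_mult_mat[OF cHc R(1) cGc] by simp
    also have "\<dots> = (cmat Pi * cmat H) * ?Y" by (rule assoc_mult_mat[OF cPc cHc Yc, symmetric])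
    finally show ?thesis unfolding PH append_rows_mult[OF cH0c cH1c Yc] .
  qed
  have Tc: "s \<cdot>\<^sub>m (?cH1 * (?S * ?V)) \<in> carrier_mat (p - m) m" using cH1c SVc by simp
  have sWc: "s \<cdot>\<^sub>m (?cH0 * ?Y) \<in> carrier_mat m m" using W by simp
  have rhs: "inverse s \<cdot>\<^sub>m ((1\<^sub>m m @\<^sub>r (?cH1 * ?cGm * ?S * ?cG * ?Ni + ?cH1 * ?cG * ?Ni))
     * (?cH0 * ?cF * ?R * ?cG + cmat (H0 * G))) = (?cH0 * ?Y) @\<^sub>r (?cH1 * ?Y)"
  proof -
    have "(1\<^sub>m m @\<^sub>r s \<cdot>\<^sub>m (?cH1 * (?S * ?V))) * (s \<cdot>\<^sub>m (?cH0 * ?Y))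
       = (1\<^sub>m m * (s \<cdot>\<^sub>m (?cH0 * ?Y))) @\<^sub>r (s \<cdot>\<^sub>m (?cH1 * (?S * ?V)) * (s \<cdot>\<^sub>m (?cH0 * ?Y)))"
      by (rule append_rows_mult[OF one_carrier_mat Tc sWc])
    also have "\<dots> = (s \<cdot>\<^sub>m (?cH0 * ?Y)) @\<^sub>r (s \<cdot>\<^sub>m (?cH1 * ?Y))"
      unfolding left_mult_one_mat[OF sWc] mult_smult_distrib[OF Tc W] X ..
    also have "inverse s \<cdot>\<^sub>m \<dots> = (inverse s \<cdot>\<^sub>m (s \<cdot>\<^sub>m (?cH0 * ?Y))) @\<^sub>r (inverse s \<cdot>\<^sub>m (s \<cdot>\<^sub>m (?cH1 * ?Y)))"
      by (rule smult_append_rows[of _ m m _ "p - m"]) (use W cH1c Yc in auto)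
    also have "inverse s \<cdot>\<^sub>m (s \<cdot>\<^sub>m (?cH0 * ?Y)) = ?cH0 * ?Y"
      using s0 W by (intro eq_matI) auto
    also have "inverse s \<cdot>\<^sub>m (s \<cdot>\<^sub>m (?cH1 * ?Y)) = ?cH1 * ?Y"
      using s0 cH1c Yc by (intro eq_matI) auto
    finally show ?thesis unfolding Teq Meq .
  qed
  show ?thesis unfolding Let_def lhs rhs ..
qed

end
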